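(* Let $(X,\Sigma)$ be a locally finite test space and let $\mathrm{Pl}:E(X,\Sigma)\to D$ be a plausibility measure on it. If $\mathrm{Pl}$ is Archimedean, then $\mathrm{Pl}$ almost agrees with some probability measure $\mu$ on $(X,\Sigma)$. That is, there is a probability measure $\mu$ such that for all events $A,B$, $\mathrm{Pl}(A)\preceq\mathrm{Pl}(B)$ implies $\mu(A)\le\mu(B)$.
   Context: A test space $(X,\Sigma)$ is a set $X$ of outcomes together with a set $\Sigma\subseteq 2^X$ of subsets (called tests) with $\bigcup_{T\in\Sigma}T=X$. It is locally finite if every test is a finite set. An event is a subset of $X$ that is contained in some test, and $E(X,\Sigma)$ denotes the set of all events. A probability measure on $(X,\Sigma)$ is a function $\mu:X\to\mathbb{R}_{\ge0}$ with $\sum_{x\in T}\mu(x)=1$ for every $T\in\Sigma$. It is extended to events by $\mu(A)=\sum_{x\in A}\mu(x)$. A plausibility measure is a function $\mathrm{Pl}:E(X,\Sigma)\to D$, where $(D,\preceq)$ is a partially ordered set, satisfying three conditions: (i) $\mathrm{Pl}(T)=\mathrm{Pl}(R)$ for all $T,R\in\Sigma$; (ii) $A\subseteq B$ implies $\mathrm{Pl}(A)\preceq\mathrm{Pl}(B)$; (iii) $\mathrm{Pl}(\emptyset)\prec\mathrm{Pl}(T)$ for every $T\in\Sigma$. Here $a\prec b$ means $a\preceq b$ and $b\not\preceq a$. $\mathrm{Pl}$ is Archimedean if the following holds for every $n\ge1$ and every pair of finite families of events $(A_1,\dots,A_n)$ and $(B_1,\dots,B_n)$ such that each outcome $x\in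 X$ belongs to the same number of the $A_i$ as of the $B_i$ (counted with multiplicity): whenever $\mathrm{Pl}(A_i)\preceq\mathrm{Pl}(B_i)$ for all $i=1,\dots,n-1$, then $\mathrm{Pl}(A_n)\succeq\mathrm{Pl}(B_n)$. *)

theory Defs
  imports Complex_Main
begin

definition test_space :: "'a set \<Rightarrow> 'a set set \<Rightarrow> bool" where
  "test_space X \<Sigma> \<longleftrightarrow> \<Sigma> \<subseteq> Pow X \<and> \<Union>\<Sigma> = X"

definition locally_finite :: "'a set \<Rightarrow> 'a set set \<Rightarrow> bool" where
  "locally_finite X \<Sigma> \<longleftrightarrow> test_space X \<Sigma> \<and> (\<forall>T\<in>\<Sigma>. finite T)"

definition events :: "'a set set \<Rightarrow> 'a set set" where
  "events \<Sigma> = {A. \<exists>T\<in>\<Sigma>. A \<subseteq> T}"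

text \<open>Probability measure on outcomes; extended to events by mu(A) = sum over A.\<close>
definition prob_measure :: "'a set \<Rightarrow> 'a set set \<Rightarrow> ('a \<Rightarrow> real) \<Rightarrow> bool" where
  "prob_measure X \<Sigma> \<mu> \<longleftrightarrow> (\<forall>x\<in>X. \<mu> x \<ge> 0) \<and> (\<forall>T\<in>\<Sigma>. (\<Sum>x\<in>T. \<mu> x) = 1)"

definition plausibility :: "'a set set \<Rightarrow> ('a set \<Rightarrow> 'd::order) \<Rightarrow> bool" where
  "plausibility \<Sigma> Pl \<longleftrightarrow>
     (\<forall>T\<in>\<Sigma>. \<forall>R\<in>\<Sigma>. Pl T = Pl R) \<and>
     (\<forall>A\<in>events \<Sigma>. \<forall>B\<in>events \<Sigma>. A \<subseteq> B \<longrightarrow> Pl A \<le> Pl B) \<and>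
     (\<forall>T\<in>\<Sigma>. Pl {} < Pl T)"

definition archimedean :: "'a set \<Rightarrow> 'a set set \<Rightarrow> ('a set \<Rightarrow> 'd::order) \<Rightarrow> bool" where
  "archimedean X \<Sigma> Pl \<longleftrightarrow>
     (\<forall>n::nat. \<forall>A B :: nat \<Rightarrow> 'a set.
        n \<ge> 1 \<longrightarrow>
        (\<forall>i\<in>{1..n}. A i \<in> events \<Sigma> \<and> B i \<in> events \<Sigma>) \<longrightarrow>
        (\<forall>x\<in>X. card {i\<in>{1..n}. x \<in> A i} = card {i\<in>{1..n}. x \<in> B i}) \<longrightarrow>
        (\<forall>i\<in>{1..n-1}. Pl (A i) \<le> Pl (B i)) \<longrightarrow>
        Pl (B n) \<le> Pl (A n))"

end

theory Submission
  imports Defs "HOL-Analysis.Analysis"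
begin


definition val :: "'v set \<Rightarrow> ('v \<Rightarrow> int) \<Rightarrow> ('v \<Rightarrow> real) \<Rightarrow> real" where
  "val V a \<mu> = (\<Sum>v\<in>V. of_int (a v) * \<mu> v)"

definition sat :: "'v set \<Rightarrow> ('v \<Rightarrow> real) \<Rightarrow> ('v \<Rightarrow> int) \<times> bool \<Rightarrow> bool" where
  "sat V \<mu> c = (if snd c then 0 < val V (fst c) \<mu> else 0 \<le> val V (fst c) \<mu>)"

inductive_set derivc :: "(('v \<Rightarrow> int) \<times> bool) set \<Rightarrow> (('v \<Rightarrow> int) \<times> bool) set" for C where
  base: "c \<in> C \<Longrightarrow> c \<in> derivc C"
| add: "c \<in> derivc C \<Longrightarrow> d \<in> derivc C \<Longrightarrow> (\<lambda>v. fst c v + fst d v, snd c \<or> snd d) \<in> derivc C"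

lemma deriv_scale_nat: "c \<in> derivc C \<Longrightarrow> (\<lambda>v. int (Suc n) * fst c v, snd c) \<in> derivc C"
proof (induction n)
  case 0
  then show ?case by simp
next
  case (Suc n)
  from derivc.add[OF Suc.prems Suc.IH[OF Suc.prems]]
  show ?case by (simp add: algebra_simps)
qed

lemma deriv_scale: "c \<in> derivc C \<Longrightarrow> (0::int) < k \<Longrightarrow> (\<lambda>v. k * fst c v, snd c) \<in> derivc C"
proof -
  assume c: "c \<in> derivc C" and k: "0 < k"
  have "k = int (Suc (nat k - 1))" using k by simp
  then show ?thesis using deriv_scale_nat[OF c, of "nat k - 1"] by simp
qed

lemma deriv_mono: "c \<in> derivc C' \<Longrightarrow> C' \<subseteq> derivc C \<Longrightarrow> c \<in> derivc C"
  by (induction rule: derivc.induct) (auto intro: derivc.add)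

lemma deriv_zero: "c \<in> derivc C \<Longrightarrow> (\<forall>d\<in>C. fst d x = 0) \<Longrightarrow> fst c x = 0"
  by (induction rule: derivc.induct) auto

lemma deriv_list: "c \<in> derivc C \<Longrightarrow> \<exists>cs. set cs \<subseteq> C \<and> (\<forall>v. fst c v = (\<Sum>d\<leftarrow>cs. fst d v)) \<and> (snd c \<longleftrightarrow> (\<exists>d\<in>set cs. snd d))"
proof (induction rule: derivc.induct)
  case (base c)
  then show ?case by (intro exI[of _ "[c]"]) auto
next
  case (add c d)
  then obtain cs ds where "set cs \<subseteq> C \<and> (\<forall>v. fst c v = (\<Sum>d\<leftarrow>cs. fst d v)) \<and> (snd c \<longleftrightarrow> (\<exists>d\<in>set cs. snd d))"
    "set ds \<subseteq> C \<and> (\<forall>v. fst d v = (\<Sum>d\<leftarrow>ds. fst d v)) \<and> (snd d \<longleftrightarrow> (\<exists>d\<in>set ds. snd d))" by blast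
  then show ?case by (intro exI[of _ "cs @ ds"]) auto
qed

lemma choose_t:
  fixes L U :: "'i \<Rightarrow> real"
  assumes "finite P" "finite N"
    and H: "\<forall>p\<in>P. \<forall>q\<in>N. L p \<le> U q \<and> ((sl p \<or> su q) \<longrightarrow> L p < U q)"
  shows "\<exists>t. (\<forall>p\<in>P. L p \<le> t \<and> (sl p \<longrightarrow> L p < t)) \<and> (\<forall>q\<in>N. t \<le> U q \<and> (su q \<longrightarrow> t < U q))"
proof (cases "P = {}")
  case True
  show ?thesis
  proof (cases "N = {}")
    case True
    with \<open>P = {}\<close> show ?thesis by auto
  next
    case False
    have "\<forall>q\<in>N. Min (U ` N) - 1 < U q"
    proof
      fix q assume "q \<in> N"
      then have "Min (U ` N) \<le> U q" using assms(2) by simp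
      then show "Min (U ` N) - 1 < U q" by linarith
    qed
    then show ?thesis using \<open>P = {}\<close> by (intro exI[of _ "Min (U ` N) - 1"]) auto
  qed
next
  case Pne: False
  show ?thesis
  proof (cases "N = {}")
    case True
    have "\<forall>p\<in>P. L p < Max (L ` P) + 1"
    proof
      fix p assume "p \<in> P"
      then have "L p \<le> Max (L ` P)" using assms(1) by simp
      then show "L p < Max (L ` P) + 1" by linarith
    qed
    then show ?thesis using True by (intro exI[of _ "Max (L ` P) + 1"]) auto
  next
    case Nne: False
    define l where "l = Max (L ` P)"
    define u where "u = Min (U ` N)"
    have "l \<in> L ` P" unfolding l_def using Pne assms(1) by (intro Max_in) auto
    then obtain p0 where p0: "p0 \<in> P" "L p0 = l" by auto
    have "u \<in> U ` N" unfolding u_def using Nne assms(2) by (intro Min_in) auto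
    then obtain q0 where q0: "q0 \<in> N" "U q0 = u" by auto
    have Ll: "\<forall>p\<in>P. L p \<le> l" unfolding l_def using assms(1) by simp
    have Uu: "\<forall>q\<in>N. u \<le> U q" unfolding u_def using assms(2) by simp
    have lu: "l \<le> u" using H p0 q0 by blast
    show ?thesis
    proof (cases "l < u")
      case True
      show ?thesis
      proof (intro exI[of _ "(l+u)/2"] conjI ballI impI)
        fix p assume "p \<in> P" then have "L p \<le> l" using Ll by simp
        then show "L p \<le> (l+u)/2" using True by (simp add: field_simps)
      next
        fix p assume "p \<in> P" then have "L p \<le> l" using Ll by simp
        then show "L p < (l+u)/2" using True by (simp add: field_simps)
      next
        fix q assume "q \<in> N" then have "u \<le> U q" using Uu by simp
        then show "(l+u)/2 \<le> U q" using True by (simp add: field_simps)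
      next
        fix q assume "q \<in> N" then have "u \<le> U q" using Uu by simp
        then show "(l+u)/2 < U q" using True by (simp add: field_simps)
      qed
    next
      case False
      then have "l = u" using lu by simp
      show ?thesis
      proof (intro exI[of _ l] conjI ballI impI)
        fix p assume "p \<in> P" then show "L p \<le> l" using Ll by simp
      next
        fix p assume "p \<in> P" "sl p" then show "L p < l" using H q0 \<open>l = u\<close> by blast
      next
        fix q assume "q \<in> N" then show "l \<le> U q" using Uu \<open>l = u\<close> by simp
      next
        fix q assume "q \<in> N" "su q" then show "l < U q" using H p0 by blast
      qed
    qed
  qed
qed

lemma val_insert:
  assumes "finite V" "x \<notin> V"
  shows "val (insert x V) a (\<mu>(x:=t)) = of_int (a x) * t + val V a \<mu>"
proof -
  have "(\<Sum>v\<in>V. of_int (a v) * (\<mu>(x:=t)) v) = (\<Sum>v\<in>V. of_int (a v) * \<mu> v)"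
    using assms(2) by (intro sum.cong) auto
  then show ?thesis unfolding val_def using assms by (simp add: sum.insert)
qed

lemma val_lin: "val V (\<lambda>v. k * a v + l * b v) \<mu> = of_int k * val V a \<mu> + of_int l * val V b \<mu>"
  unfolding val_def by (simp add: sum.distrib sum_distrib_left algebra_simps)

lemma fm:
  assumes "finite V"
  shows "finite C \<Longrightarrow> (\<exists>\<mu>. \<forall>c\<in>C. sat V \<mu> c) \<or> (\<exists>a. (a,True) \<in> derivc C \<and> (\<forall>v\<in>V. a v = 0))"
  using assms
proof (induction V arbitrary: C rule: finite_induct)
  case empty
  show ?case
  proof (cases "\<exists>c\<in>C. snd c")
    case True
    then obtain c where c: "c \<in> C" "snd c" by blast
    then have "(fst c, True) \<in> derivc C" using derivc.base[of c C] by (cases c) auto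
    then show ?thesis by auto
  next
    case False
    then have "\<forall>c\<in>C. sat {} (\<lambda>_. 0) c" by (auto simp: sat_def val_def)
    then show ?thesis by blast
  qed
next
  case (insert x V C)
  define P where "P = {c\<in>C. fst c x > 0}"
  define N where "N = {c\<in>C. fst c x < 0}"
  define Z where "Z = {c\<in>C. fst c x = 0}"
  define comb where "comb = (\<lambda>p q. ((\<lambda>v. (- fst q x) * fst p v + fst p x * (fst q v::int)), snd p \<or> snd q))"
  define C' where "C' = Z \<union> (\<lambda>(p,q). comb p q) ` (P \<times> N)"
  have finP: "finite P" "finite N" using insert.prems unfolding P_def N_def by auto
  have fin: "finite C'" using insert.prems finP unfolding C'_def Z_def by auto
  from insert.IH[OF fin] consider \<mu> where "\<forall>c\<in>C'. sat V \<mu> c"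
    | a where "(a,True) \<in> derivc C'" "\<forall>v\<in>V. a v = 0" by blast
  then show ?case
  proof cases
    case (1 \<mu>)
    define r where "r c = val V (fst c) \<mu>" for c :: "(_ \<Rightarrow> int) \<times> bool"
    define L where "L p = - r p / of_int (fst p x)" for p :: "(_ \<Rightarrow> int) \<times> bool"
    define U where "U q = r q / of_int (- fst q x)" for q :: "(_ \<Rightarrow> int) \<times> bool"
    have H: "\<forall>p\<in>P. \<forall>q\<in>N. L p \<le> U q \<and> ((snd p \<or> snd q) \<longrightarrow> L p < U q)"
    proof (intro ballI)
      fix p q assume p: "p \<in> P" and q: "q \<in> N"
      have "comb p q \<in> C'" using p q unfolding C'_def by auto
      then have s: "sat V \<mu> (comb p q)" using 1 by blast
      have e: "val V (fst (comb p q)) \<mu> = of_int (- fst q x) * r p + of_int (fst p x) * r q"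
        unfolding comb_def r_def fst_conv by (rule val_lin)
      have al: "0 < (of_int (fst p x)::real)" using p P_def by simp
      have be: "0 < (of_int (- fst q x)::real)" using q N_def by simp
      have i1: "L p \<le> U q \<longleftrightarrow> 0 \<le> of_int (- fst q x) * r p + of_int (fst p x) * r q"
        using al be unfolding L_def U_def by (simp add: field_simps)
      have i2: "L p < U q \<longleftrightarrow> 0 < of_int (- fst q x) * r p + of_int (fst p x) * r q"
        using al be unfolding L_def U_def by (simp add: field_simps)
      have "snd (comb p q) = (snd p \<or> snd q)" unfolding comb_def by simp
      then show "L p \<le> U q \<and> ((snd p \<or> snd q) \<longrightarrow> L p < U q)"
        using s e i1 i2 unfolding sat_def by (auto split: if_splits)
    qed
    obtain t where t: "\<forall>p\<in>P. L p \<le> t \<and> (snd p \<longrightarrow> L p < t)" "\<forall>q\<in>N. t \<le> U q \<and> (snd q \<longrightarrow> t < U q)"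
      using choose_t[OF finP H] by blast
    have "\<forall>c\<in>C. sat (insert x V) (\<mu>(x:=t)) c"
    proof
      fix c assume c: "c \<in> C"
      have v: "val (insert x V) (fst c) (\<mu>(x:=t)) = of_int (fst c x) * t + r c"
        unfolding r_def using insert.hyps by (simp add: val_insert)
      consider "fst c x > 0" | "fst c x < 0" | "fst c x = 0" by linarith
      then show "sat (insert x V) (\<mu>(x:=t)) c"
      proof cases
        case 1
        then have cP: "c \<in> P" using c P_def by simp
        have al: "0 < (of_int (fst c x)::real)" using 1 by simp
        have j1: "L c \<le> t \<longleftrightarrow> 0 \<le> of_int (fst c x) * t + r c"
          using al unfolding L_def by (auto simp: field_simps)
        have j2: "L c < t \<longleftrightarrow> 0 < of_int (fst c x) * t + r c"
          using al unfolding L_def by (auto simp: field_simps)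
        show ?thesis using t(1) cP j1 j2 v unfolding sat_def by auto
      next
        case 2
        then have cN: "c \<in> N" using c N_def by simp
        have be: "0 < (of_int (- fst c x)::real)" using 2 by simp
        have j1: "t \<le> U c \<longleftrightarrow> 0 \<le> of_int (fst c x) * t + r c"
          using be unfolding U_def by (auto simp: field_simps)
        have j2: "t < U c \<longleftrightarrow> 0 < of_int (fst c x) * t + r c"
          using be unfolding U_def by (auto simp: field_simps)
        show ?thesis using t(2) cN j1 j2 v unfolding sat_def by auto
      next
        case 3
        then have "c \<in> C'" using c unfolding C'_def Z_def by simp
        then have "sat V \<mu> c" using \<open>\<forall>c\<in>C'. sat V \<mu> c\<close> by blast
        then show ?thesis using v 3 unfolding sat_def r_def by simp
      qed
    qed
    then show ?thesis by blast
  next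
    case (2 a)
    have sub: "C' \<subseteq> derivc C"
    proof
      fix c assume "c \<in> C'"
      then consider "c \<in> Z" | p q where "p \<in> P" "q \<in> N" "c = comb p q" unfolding C'_def by auto
      then show "c \<in> derivc C"
      proof cases
        case 1
        then show ?thesis unfolding Z_def by (auto intro: derivc.base)
      next
        case (2 p q)
        have pd: "p \<in> derivc C" and qd: "q \<in> derivc C" using 2 unfolding P_def N_def by (auto intro: derivc.base)
        have "(\<lambda>v. (- fst q x) * fst p v, snd p) \<in> derivc C"
          using deriv_scale[OF pd, of "- fst q x"] 2 N_def by simp
        moreover have "(\<lambda>v. fst p x * fst q v, snd q) \<in> derivc C"
          using deriv_scale[OF qd, of "fst p x"] 2 P_def by simp
        ultimately have "(\<lambda>v. (- fst q x) * fst p v + fst p x * fst q v, snd p \<or> snd q) \<in> derivc C"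
          using derivc.add by fastforce
        then show ?thesis using 2 unfolding comb_def by simp
      qed
    qed
    have z: "\<forall>d\<in>C'. fst d x = 0" unfolding C'_def Z_def comb_def by (auto simp: algebra_simps)
    have "a x = 0" using deriv_zero[OF 2(1) z] by simp
    then show ?thesis using deriv_mono[OF 2(1) sub] 2(2) by auto
  qed
qed



definition ind :: "'a set \<Rightarrow> 'a \<Rightarrow> int" where "ind S v = (if v \<in> S then 1 else 0)"

lemma card_filter_idx: "card {i\<in>{1..length ws}. P (ws!(i-1))} = length (filter P ws)"
proof -
  have "{i\<in>{1..length ws}. P (ws!(i-1))} = Suc ` {i. i < length ws \<and> P (ws!i)}"
  proof (rule set_eqI, rule iffI)
    fix i assume "i \<in> {i\<in>{1..length ws}. P (ws!(i-1))}"
    then have "i - 1 \<in> {i. i < length ws \<and> P (ws!i)}" "i = Suc (i - 1)" by auto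
    then show "i \<in> Suc ` {i. i < length ws \<and> P (ws!i)}" by blast
  qed auto
  then show ?thesis by (simp add: card_image length_filter_conv_card)
qed

lemma sum_ind_list: "(\<Sum>w\<leftarrow>ws. ind (B w) v - ind (A w) v) =
   int (length (filter (\<lambda>w. v \<in> B w) ws)) - int (length (filter (\<lambda>w. v \<in> A w) ws))"
  by (induction ws) (auto simp: ind_def)

lemma arch_contra:
  fixes Pl :: "'a set \<Rightarrow> 'd::order"
  assumes arch: "archimedean X \<Sigma> Pl" and strict: "Pl {} < Pl T0"
    and ws: "\<forall>w\<in>set ws. fst w \<in> events \<Sigma> \<and> fst (snd w) \<in> events \<Sigma> \<and> Pl (fst w) \<le> Pl (fst (snd w))"
    and ne: "ws \<noteq> []" and lst: "last ws = ({}, T0, s)"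
    and bal: "\<forall>v\<in>X. (\<Sum>w\<leftarrow>ws. ind (fst (snd w)) v - ind (fst w) v) = 0"
  shows False
proof -
  define n where "n = length ws"
  define A where "A i = fst (ws!(i-1))" for i
  define B where "B i = fst (snd (ws!(i-1)))" for i
  have n1: "n \<ge> 1" using ne unfolding n_def by (cases ws) auto
  have mem: "ws!(i-1) \<in> set ws" if "i \<in> {1..n}" for i using that unfolding n_def by auto
  have ev: "\<forall>i\<in>{1..n}. A i \<in> events \<Sigma> \<and> B i \<in> events \<Sigma>"
    using ws mem unfolding A_def B_def by blast
  have cnt: "\<forall>x\<in>X. card {i\<in>{1..n}. x \<in> A i} = card {i\<in>{1..n}. x \<in> B i}"
  proof
    fix x assume "x \<in> X"
    then have "(\<Sum>w\<leftarrow>ws. ind (fst (snd w)) x - ind (fst w) x) = 0" using bal by blast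
    then have "length (filter (\<lambda>w. x \<in> fst (snd w)) ws) = length (filter (\<lambda>w. x \<in> fst w) ws)"
      using sum_ind_list[of "\<lambda>w. fst (snd w)" x "\<lambda>w. fst w" ws] by simp
    then show "card {i\<in>{1..n}. x \<in> A i} = card {i\<in>{1..n}. x \<in> B i}"
      unfolding A_def B_def n_def
      using card_filter_idx[where P="\<lambda>w. x \<in> fst w" and ws=ws] card_filter_idx[where P="\<lambda>w. x \<in> fst (snd w)" and ws=ws] by simp
  qed
  have le: "\<forall>i\<in>{1..n-1}. Pl (A i) \<le> Pl (B i)"
  proof
    fix i assume "i \<in> {1..n-1}"
    then have "i \<in> {1..n}" by auto
    then show "Pl (A i) \<le> Pl (B i)" using ws mem unfolding A_def B_def by blast
  qed
  have "Pl (B n) \<le> Pl (A n)" using arch n1 ev cnt le unfolding archimedean_def by blast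
  moreover have "ws!(n-1) = last ws" using ne unfolding n_def by (simp add: last_conv_nth)
  ultimately have "Pl T0 \<le> Pl {}" using lst unfolding A_def B_def by simp
  then show False using strict by simp
qed

lemma val_ind:
  assumes "finite V" "A \<subseteq> V" "B \<subseteq> V"
  shows "val V (\<lambda>v. ind B v - ind A v) \<mu> = sum \<mu> B - sum \<mu> A"
proof -
  have sB: "sum \<mu> B = (\<Sum>v\<in>V. if v \<in> B then \<mu> v else 0)"
  proof -
    have "B = {v\<in>V. v \<in> B}" using assms by auto
    then have "sum \<mu> B = sum \<mu> {v\<in>V. v \<in> B}" by simp
    also have "\<dots> = (\<Sum>v\<in>V. if v \<in> B then \<mu> v else 0)" by (rule sum.inter_filter[OF assms(1)])
    finally show ?thesis .
  qed
  have sA: "sum \<mu> A = (\<Sum>v\<in>V. if v \<in> A then \<mu> v else 0)"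
  proof -
    have "A = {v\<in>V. v \<in> A}" using assms by auto
    then have "sum \<mu> A = sum \<mu> {v\<in>V. v \<in> A}" by simp
    also have "\<dots> = (\<Sum>v\<in>V. if v \<in> A then \<mu> v else 0)" by (rule sum.inter_filter[OF assms(1)])
    finally show ?thesis .
  qed
  have "val V (\<lambda>v. ind B v - ind A v) \<mu> = (\<Sum>v\<in>V. (if v \<in> B then \<mu> v else 0) - (if v \<in> A then \<mu> v else 0))"
    unfolding val_def ind_def by (intro sum.cong) (auto simp: algebra_simps)
  also have "\<dots> = sum \<mu> B - sum \<mu> A" unfolding sA sB by (simp add: sum_subtractf)
  finally show ?thesis .
qed

lemma finite_feasible:
  fixes Pl :: "'a set \<Rightarrow> 'd::order" and X :: "'a set"
  assumes lf: "locally_finite X \<Sigma>" and pl: "plausibility \<Sigma> Pl" and arch: "archimedean X \<Sigma> Pl"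
    and T0: "T0 \<in> \<Sigma>" and fT: "finite \<T>" "\<T> \<subseteq> \<Sigma>" and fP: "finite \<P>"
    and P: "\<forall>p\<in>\<P>. fst p \<in> events \<Sigma> \<and> snd p \<in> events \<Sigma> \<and> Pl (fst p) \<le> Pl (snd p)"
  shows "\<exists>\<mu>::'a \<Rightarrow> real. (\<forall>x\<in>X. 0 \<le> \<mu> x \<and> \<mu> x \<le> 1) \<and> (\<forall>T\<in>\<T>. sum \<mu> T = 1) \<and> (\<forall>p\<in>\<P>. sum \<mu> (fst p) \<le> sum \<mu> (snd p))"
proof -
  from lf have sub: "\<Sigma> \<subseteq> Pow X" "\<Union>\<Sigma> = X" "\<forall>T\<in>\<Sigma>. finite T"
    by (auto simp: locally_finite_def test_space_def)
  from pl have eqT: "\<forall>T\<in>\<Sigma>. \<forall>R\<in>\<Sigma>. Pl T = Pl R"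
    and mono: "\<forall>A\<in>events \<Sigma>. \<forall>B\<in>events \<Sigma>. A \<subseteq> B \<longrightarrow> Pl A \<le> Pl B"
    and strict: "\<forall>T\<in>\<Sigma>. Pl {} < Pl T" unfolding plausibility_def by blast+
  have evfin: "finite A \<and> A \<subseteq> X" if A: "A \<in> events \<Sigma>" for A
  proof -
    obtain T where "T \<in> \<Sigma>" "A \<subseteq> T" using A unfolding events_def by blast
    then show ?thesis using sub by (auto intro: finite_subset)
  qed
  have Tev: "T \<in> events \<Sigma>" if "T \<in> \<Sigma>" for T using that unfolding events_def by blast
  have subev: "A \<in> events \<Sigma>" if "A \<subseteq> T" "T \<in> \<Sigma>" for A T using that unfolding events_def by blast
  define V0 where "V0 = \<Union>\<T> \<union> T0 \<union> (\<Union>p\<in>\<P>. fst p \<union> snd p)"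
  define tst where "tst v = (SOME T. T \<in> \<Sigma> \<and> v \<in> T)" for v
  have tst: "tst v \<in> \<Sigma> \<and> v \<in> tst v" if "v \<in> X" for v
  proof -
    have "\<exists>T. T \<in> \<Sigma> \<and> v \<in> T" using that sub(2) by blast
    then show ?thesis unfolding tst_def by (rule someI_ex)
  qed
  have V0X: "V0 \<subseteq> X" unfolding V0_def using fT sub T0 P evfin by blast
  have f1: "finite (\<Union>\<T>)" using fT sub(3) by (intro finite_Union) auto
  have f2: "finite (\<Union>p\<in>\<P>. fst p \<union> snd p)" using fP P evfin by (intro finite_UN_I) auto
  have finV0: "finite V0" unfolding V0_def using f1 f2 T0 sub(3) by auto
  define \<T>' where "\<T>' = insert T0 \<T> \<union> tst ` V0"
  define V where "V = \<Union>\<T>' \<union> (\<Union>p\<in>\<P>. fst p \<union> snd p)"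
  have T'S: "\<T>' \<subseteq> \<Sigma>" unfolding \<T>'_def using T0 fT tst V0X by auto
  have finT': "finite \<T>'" unfolding \<T>'_def using fT finV0 by auto
  have f3: "finite (\<Union>\<T>')" using finT' T'S sub(3) by (intro finite_Union) auto
  have finV: "finite V" unfolding V_def using f3 f2 by auto
  have VX: "V \<subseteq> X" unfolding V_def using T'S sub P evfin by blast
  have T'V: "T \<subseteq> V" if "T \<in> \<T>'" for T using that unfolding V_def by blast
  have PV: "fst p \<subseteq> V \<and> snd p \<subseteq> V" if "p \<in> \<P>" for p using that unfolding V_def by blast
  have cover: "\<exists>T\<in>\<T>'. v \<in> T" if "v \<in> V" for v
  proof (cases "v \<in> \<Union>\<T>'")
    case True then show ?thesis by blast
  next
    case False
    then have "v \<in> V0" using that unfolding V_def V0_def by blast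
    then have "tst v \<in> \<T>'" "v \<in> tst v" using tst V0X unfolding \<T>'_def by auto
    then show ?thesis by blast
  qed
  have T0T': "T0 \<in> \<T>'" unfolding \<T>'_def by simp
  define Q :: "('a set \<times> 'a set \<times> bool) set" where
    "Q = (\<lambda>v. ({}, {v}, False)) ` V \<union> (\<lambda>T. (T0, T, False)) ` \<T>' \<union> (\<lambda>T. (T, T0, False)) ` \<T>'
         \<union> (\<lambda>p. (fst p, snd p, False)) ` \<P> \<union> {({}, T0, True)}"
  define f where "f q = (\<lambda>v. ind (fst (snd q)) v - ind (fst q) v, snd (snd q))" for q :: "'a set \<times> 'a set \<times> bool"
  define C where "C = f ` Q"
  have finQ: "finite Q" unfolding Q_def using finV finT' fP by auto
  have finC: "finite C" unfolding C_def using finQ by auto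
  have emptyev: "{} \<in> events \<Sigma>" using subev[OF _ T0] by blast
  have Qprop: "fst q \<in> events \<Sigma> \<and> fst (snd q) \<in> events \<Sigma> \<and> Pl (fst q) \<le> Pl (fst (snd q))
      \<and> fst q \<subseteq> V \<and> fst (snd q) \<subseteq> V \<and> (snd (snd q) \<longrightarrow> fst q = {} \<and> fst (snd q) = T0)" if "q \<in> Q" for q
  proof -
    consider (s) v where "v \<in> V" "q = ({}, {v}, False)" | (a) T where "T \<in> \<T>'" "q = (T0, T, False)"
      | (b) T where "T \<in> \<T>'" "q = (T, T0, False)" | (c) p where "p \<in> \<P>" "q = (fst p, snd p, False)"
      | (d) "q = ({}, T0, True)" using \<open>q \<in> Q\<close> unfolding Q_def by blast
    then show ?thesis
    proof cases
      case s
      then obtain T where T: "T \<in> \<T>'" "v \<in> T" using cover by blast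
      then have ev: "{v} \<in> events \<Sigma>" using T'S by (intro subev[of _ T]) auto
      have "Pl {} \<le> Pl {v}" using mono emptyev ev by blast
      then show ?thesis using s ev emptyev by simp
    next
      case a
      then have TS: "T \<in> \<Sigma>" using T'S by auto
      have "Pl T0 = Pl T" using eqT T0 TS by blast
      then show ?thesis using a Tev[OF T0] Tev[OF TS] T'V[OF a(1)] T'V[OF T0T'] by simp
    next
      case b
      then have TS: "T \<in> \<Sigma>" using T'S by auto
      have "Pl T0 = Pl T" using eqT T0 TS by blast
      then show ?thesis using b Tev[OF T0] Tev[OF TS] T'V[OF b(1)] T'V[OF T0T'] by simp
    next
      case c
      then show ?thesis using P PV by simp
    next
      case d
      have "Pl {} \<le> Pl T0" using mono emptyev Tev[OF T0] by blast
      then show ?thesis using d emptyev Tev[OF T0] T'V[OF T0T'] by simp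
    qed
  qed
  from fm[OF finV finC] consider \<mu> where "\<forall>c\<in>C. sat V \<mu> c"
    | a where "(a, True) \<in> derivc C" "\<forall>v\<in>V. a v = 0" by blast
  then show ?thesis
  proof cases
    case (1 \<mu>)
    have qs: "sum \<mu> (fst q) \<le> sum \<mu> (fst (snd q)) \<and> (snd (snd q) \<longrightarrow> sum \<mu> (fst q) < sum \<mu> (fst (snd q)))"
      if "q \<in> Q" for q
    proof -
      have "sat V \<mu> (f q)" using 1 that unfolding C_def by blast
      moreover have "val V (fst (f q)) \<mu> = sum \<mu> (fst (snd q)) - sum \<mu> (fst q)"
        unfolding f_def fst_conv using Qprop[OF that] finV by (intro val_ind) auto
      ultimately show ?thesis unfolding sat_def f_def by (auto split: if_splits)
    qed
    have nn: "0 \<le> \<mu> v" if v: "v \<in> V" for v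
    proof -
      have "({}, {v}, False) \<in> Q" unfolding Q_def using v by blast
      from qs[OF this] show ?thesis by simp
    qed
    have teq: "sum \<mu> T = sum \<mu> T0" if T: "T \<in> \<T>'" for T
    proof -
      have "(T0, T, False) \<in> Q" "(T, T0, False) \<in> Q" unfolding Q_def using T by blast+
      from qs[OF this(1)] qs[OF this(2)] show ?thesis by simp
    qed
    have pos: "0 < sum \<mu> T0"
    proof -
      have "({}, T0, True) \<in> Q" unfolding Q_def by blast
      from qs[OF this] show ?thesis by simp
    qed
    define s where "s = sum \<mu> T0"
    define \<mu>' where "\<mu>' v = (if v \<in> V then \<mu> v / s else 0)" for v
    have sm: "sum \<mu>' S = sum \<mu> S / s" if "S \<subseteq> V" for S
    proof -
      have "sum \<mu>' S = (\<Sum>v\<in>S. \<mu> v / s)" using that unfolding \<mu>'_def by (intro sum.cong) auto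
      then show ?thesis by (simp add: sum_divide_distrib)
    qed
    have t1: "sum \<mu>' T = 1" if "T \<in> \<T>'" for T
      using sm[OF T'V[OF that]] teq[OF that] pos unfolding s_def by simp
    have bnd: "\<forall>x\<in>X. 0 \<le> \<mu>' x \<and> \<mu>' x \<le> 1"
    proof
      fix x assume "x \<in> X"
      show "0 \<le> \<mu>' x \<and> \<mu>' x \<le> 1"
      proof (cases "x \<in> V")
        case True
        then obtain T where T: "T \<in> \<T>'" "x \<in> T" using cover by blast
        have finT: "finite T" using T T'S sub by auto
        have nnT: "\<forall>v\<in>T. 0 \<le> \<mu>' v"
        proof
          fix v assume "v \<in> T"
          then have "v \<in> V" using T'V[OF T(1)] by blast
          then show "0 \<le> \<mu>' v" using nn[of v] pos unfolding \<mu>'_def s_def by simp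
        qed
        have "\<mu>' x \<le> sum \<mu>' T" by (rule member_le_sum[OF T(2)]) (use nnT finT in auto)
        moreover have "0 \<le> \<mu>' x" using nnT T(2) by blast
        ultimately show ?thesis using t1[OF T(1)] by simp
      next
        case False then show ?thesis unfolding \<mu>'_def by simp
      qed
    qed
    have tT: "\<forall>T\<in>\<T>. sum \<mu>' T = 1"
    proof
      fix T assume "T \<in> \<T>"
      then have "T \<in> \<T>'" unfolding \<T>'_def by blast
      then show "sum \<mu>' T = 1" by (rule t1)
    qed
    have pP: "\<forall>p\<in>\<P>. sum \<mu>' (fst p) \<le> sum \<mu>' (snd p)"
    proof
      fix p assume p: "p \<in> \<P>"
      then have "(fst p, snd p, False) \<in> Q" unfolding Q_def by blast
      from qs[OF this] have "sum \<mu> (fst p) \<le> sum \<mu> (snd p)" by simp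
      moreover have "sum \<mu>' (fst p) = sum \<mu> (fst p) / s" "sum \<mu>' (snd p) = sum \<mu> (snd p) / s"
        using sm PV[OF p] by blast+
      moreover have "0 < s" using pos unfolding s_def .
      ultimately show "sum \<mu>' (fst p) \<le> sum \<mu>' (snd p)" by (simp add: divide_right_mono)
    qed
    have "(\<forall>x\<in>X. 0 \<le> \<mu>' x \<and> \<mu>' x \<le> 1) \<and> (\<forall>T\<in>\<T>. sum \<mu>' T = 1) \<and> (\<forall>p\<in>\<P>. sum \<mu>' (fst p) \<le> sum \<mu>' (snd p))"
      using bnd tT pP by (intro conjI)
    then show ?thesis by (rule exI[where x="\<mu>'"])
  next
    case (2 a)
    obtain cs where cs: "set cs \<subseteq> C" "\<forall>v. a v = (\<Sum>d\<leftarrow>cs. fst d v)" "\<exists>d\<in>set cs. snd d"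
      using deriv_list[OF 2(1)] by auto
    define qs where "qs = map (inv_into Q f) cs"
    have qsQ: "set qs \<subseteq> Q"
    proof
      fix y assume "y \<in> set qs"
      then obtain c where c: "c \<in> set cs" "y = inv_into Q f c" unfolding qs_def by auto
      then have "c \<in> f ` Q" using cs(1) unfolding C_def by blast
      then show "y \<in> Q" using c(2) by (simp add: inv_into_into)
    qed
    have csqs: "cs = map f qs" unfolding qs_def map_map
      using cs(1) unfolding C_def by (intro map_idI[symmetric]) (auto simp: f_inv_into_f)
    obtain q where q: "q \<in> set qs" "snd (snd q)" using cs(3) csqs by (auto simp: f_def)
    have qQ: "q \<in> Q" using q(1) qsQ by blast
    have "fst q = {}" "fst (snd q) = T0" using Qprop[OF qQ] q(2) by blast+
    then have qeq: "q = ({}, T0, True)" using q(2) by (cases q) simp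
    obtain ys zs where yz: "qs = ys @ q # zs" using split_list[OF q(1)] by blast
    define ws where "ws = ys @ zs @ [q]"
    have wsQ: "set ws \<subseteq> Q" using qsQ yz unfolding ws_def by auto
    show ?thesis
    proof (rule FalseE, rule arch_contra[OF arch, of T0 ws True])
      show "Pl {} < Pl T0" using strict T0 by blast
      show "\<forall>w\<in>set ws. fst w \<in> events \<Sigma> \<and> fst (snd w) \<in> events \<Sigma> \<and> Pl (fst w) \<le> Pl (fst (snd w))"
      proof
        fix w assume "w \<in> set ws"
        then have wQ: "w \<in> Q" using wsQ by blast
        show "fst w \<in> events \<Sigma> \<and> fst (snd w) \<in> events \<Sigma> \<and> Pl (fst w) \<le> Pl (fst (snd w))"
          using Qprop[OF wQ] by blast
      qed
      show "ws \<noteq> []" unfolding ws_def by simp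
      show "last ws = ({}, T0, True)" unfolding ws_def using qeq by simp
      show "\<forall>v\<in>X. (\<Sum>w\<leftarrow>ws. ind (fst (snd w)) v - ind (fst w) v) = 0"
      proof
        fix v assume "v \<in> X"
        define g where "g w = ind (fst (snd w)) v - ind (fst w) v" for w :: "'a set \<times> 'a set \<times> bool"
        have "(\<Sum>w\<leftarrow>ws. g w) = (\<Sum>w\<leftarrow>qs. g w)" unfolding ws_def yz by simp
        show "(\<Sum>w\<leftarrow>ws. ind (fst (snd w)) v - ind (fst w) v) = 0"
        proof (cases "v \<in> V")
          case True
          have "(\<Sum>w\<leftarrow>qs. g w) = a v" using cs(2) csqs unfolding g_def f_def by (simp add: comp_def)
          then show ?thesis using \<open>(\<Sum>w\<leftarrow>ws. g w) = (\<Sum>w\<leftarrow>qs. g w)\<close> 2(2) True unfolding g_def by simp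
        next
          case False
          have "\<forall>w\<in>set ws. g w = 0"
          proof
            fix w assume "w \<in> set ws"
            then have wQ: "w \<in> Q" using wsQ by blast
            have "fst w \<subseteq> V" "fst (snd w) \<subseteq> V" using Qprop[OF wQ] by blast+
            then have "v \<notin> fst w" "v \<notin> fst (snd w)" using False by blast+
            then show "g w = 0" unfolding g_def ind_def by simp
          qed
          then have "(\<Sum>w\<leftarrow>ws. g w) = 0" by (induction ws) auto
          then show ?thesis unfolding g_def by simp
        qed
      qed
    qed
  qed
qed



theorem theorem2:
  fixes X :: "'a set" and \<Sigma> :: "'a set set" and Pl :: "'a set \<Rightarrow> 'd::order"
  assumes "locally_finite X \<Sigma>"
    and "plausibility \<Sigma> Pl"
    and "archimedean X \<Sigma> Pl"
  shows "\<exists>\<mu>. prob_measure X \<Sigma> \<mu> \<and>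
           (\<forall>A\<in>events \<Sigma>. \<forall>B\<in>events \<Sigma>. Pl A \<le> Pl B \<longrightarrow> (\<Sum>x\<in>A. \<mu> x) \<le> (\<Sum>x\<in>B. \<mu> x))"
proof -
  from assms(1) have sub: "\<Sigma> \<subseteq> Pow X" "\<Union>\<Sigma> = X" "\<forall>T\<in>\<Sigma>. finite T"
    by (auto simp: locally_finite_def test_space_def)
  have evfin: "finite A \<and> A \<subseteq> X" if A: "A \<in> events \<Sigma>" for A
  proof -
    obtain T where "T \<in> \<Sigma>" "A \<subseteq> T" using A unfolding events_def by blast
    then show ?thesis using sub by (auto intro: finite_subset)
  qed
  show ?thesis
  proof (cases "\<Sigma> = {}")
    case True
    then have "prob_measure X \<Sigma> (\<lambda>_. 0) \<and>
           (\<forall>A\<in>events \<Sigma>. \<forall>B\<in>events \<Sigma>. Pl A \<le> Pl B \<longrightarrow> (\<Sum>x\<in>A. (\<lambda>_. 0::real) x) \<le> (\<Sum>x\<in>B. (\<lambda>_. 0::real) x))"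
      by (auto simp: prob_measure_def events_def)
    then show ?thesis by (rule exI[where x="\<lambda>_. 0"])
  next
    case False
    then obtain T0 where T0: "T0 \<in> \<Sigma>" by blast
    define TOP where "TOP = product_topology (\<lambda>_. (euclidean :: real topology)) X"
    define K where "K = PiE X (\<lambda>_. {0..1::real})"
    have compK: "compactin TOP K" unfolding TOP_def K_def by (simp add: compactin_PiE)
    define PP where "PP = {p. fst p \<in> events \<Sigma> \<and> snd p \<in> events \<Sigma> \<and> Pl (fst p) \<le> Pl (snd p)}"
    define F1 where "F1 T = {\<mu> \<in> topspace TOP. sum \<mu> T \<in> {1}}" for T
    define F2 where "F2 p = {\<mu> \<in> topspace TOP. sum \<mu> (snd p) - sum \<mu> (fst p) \<in> {0..}}" for p :: "'a set \<times> 'a set"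
    define U where "U = F1 ` \<Sigma> \<union> F2 ` PP"
    have cont: "continuous_map TOP euclidean (\<lambda>\<mu>. sum \<mu> S)" if "S \<subseteq> X" "finite S" for S
      unfolding TOP_def using that by (intro continuous_map_sum) (auto intro: continuous_map_product_projection)
    have clo: "\<forall>C\<in>U. closedin TOP C"
    proof
      fix C assume "C \<in> U"
      then consider T where "T \<in> \<Sigma>" "C = F1 T" | p where "p \<in> PP" "C = F2 p" unfolding U_def by blast
      then show "closedin TOP C"
      proof cases
        case 1
        have c: "continuous_map TOP euclidean (\<lambda>\<mu>. sum \<mu> T)" using 1 sub by (intro cont) auto
        show ?thesis unfolding 1 F1_def
          by (rule closedin_continuous_map_preimage[OF c]) (simp add: closed_closedin[symmetric])
      next
        case 2
        have "fst p \<in> events \<Sigma>" "snd p \<in> events \<Sigma>" using 2 unfolding PP_def by auto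
        then have c1: "continuous_map TOP euclidean (\<lambda>\<mu>. sum \<mu> (fst p))"
          and c2: "continuous_map TOP euclidean (\<lambda>\<mu>. sum \<mu> (snd p))" using evfin cont by blast+
        have c: "continuous_map TOP euclidean (\<lambda>\<mu>. sum \<mu> (snd p) - sum \<mu> (fst p))"
          by (rule continuous_map_diff[OF c2 c1])
        show ?thesis unfolding 2 F2_def
          by (rule closedin_continuous_map_preimage[OF c]) (simp add: closed_closedin[symmetric])
      qed
    qed
    have fip: "\<forall>\<F>. finite \<F> \<and> \<F> \<subseteq> U \<longrightarrow> K \<inter> \<Inter>\<F> \<noteq> {}"
    proof (intro allI impI)
      fix \<F> assume F: "finite \<F> \<and> \<F> \<subseteq> U"
      have "finite (\<F> \<inter> F1 ` \<Sigma>)" "\<F> \<inter> F1 ` \<Sigma> \<subseteq> F1 ` \<Sigma>" using F by auto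
      then obtain \<T> where T: "\<T> \<subseteq> \<Sigma>" "finite \<T>" "\<F> \<inter> F1 ` \<Sigma> = F1 ` \<T>"
        using finite_subset_image by metis
      have "finite (\<F> \<inter> F2 ` PP)" "\<F> \<inter> F2 ` PP \<subseteq> F2 ` PP" using F by auto
      then obtain \<P> where P: "\<P> \<subseteq> PP" "finite \<P>" "\<F> \<inter> F2 ` PP = F2 ` \<P>"
        using finite_subset_image by metis
      have FF: "\<F> = F1 ` \<T> \<union> F2 ` \<P>" using F T(3) P(3) unfolding U_def by blast
      have Pp: "\<forall>p\<in>\<P>. fst p \<in> events \<Sigma> \<and> snd p \<in> events \<Sigma> \<and> Pl (fst p) \<le> Pl (snd p)"
        using P(1) unfolding PP_def by blast
      obtain \<mu> :: "'a \<Rightarrow> real" where mu: "\<forall>x\<in>X. 0 \<le> \<mu> x \<and> \<mu> x \<le> 1" "\<forall>T\<in>\<T>. sum \<mu> T = 1"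
        "\<forall>p\<in>\<P>. sum \<mu> (fst p) \<le> sum \<mu> (snd p)"
        using finite_feasible[OF assms T0 T(2) T(1) P(2) Pp] by blast
      define \<nu> where "\<nu> = restrict \<mu> X"
      have sumeq: "sum \<nu> S = sum \<mu> S" if "S \<subseteq> X" for S
        unfolding \<nu>_def using that by (intro sum.cong) auto
      have nuK: "\<nu> \<in> K" unfolding K_def \<nu>_def using mu(1) by auto
      have nuT: "\<nu> \<in> topspace TOP" unfolding TOP_def \<nu>_def by simp
      have "\<nu> \<in> C" if C: "C \<in> \<F>" for C
      proof -
        from C FF consider T where "T \<in> \<T>" "C = F1 T" | p where "p \<in> \<P>" "C = F2 p" by blast
        then show ?thesis
        proof cases
          case 1
          then have "T \<subseteq> X" using T(1) sub by blast
          then show ?thesis using 1 mu(2) sumeq nuT unfolding F1_def by simp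
        next
          case 2
          then have "fst p \<subseteq> X" "snd p \<subseteq> X" using Pp evfin by blast+
          then show ?thesis using 2 mu(3) sumeq nuT unfolding F2_def by simp
        qed
      qed
      then show "K \<inter> \<Inter>\<F> \<noteq> {}" using nuK by blast
    qed
    have "\<forall>\<U>. (\<forall>C\<in>\<U>. closedin TOP C) \<and> (\<forall>\<F>. finite \<F> \<and> \<F> \<subseteq> \<U> \<longrightarrow> K \<inter> \<Inter>\<F> \<noteq> {}) \<longrightarrow> K \<inter> \<Inter>\<U> \<noteq> {}"
      using compK unfolding compactin_fip by (rule conjunct2)
    then have "K \<inter> \<Inter>U \<noteq> {}" using clo fip by blast
    then obtain \<mu> where muK: "\<mu> \<in> K" and muU: "\<mu> \<in> \<Inter>U" by blast
    have pm: "prob_measure X \<Sigma> \<mu>"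
      unfolding prob_measure_def
    proof (intro conjI ballI)
      fix x assume "x \<in> X" then show "0 \<le> \<mu> x" using muK unfolding K_def by auto
    next
      fix T assume "T \<in> \<Sigma>"
      then have "\<mu> \<in> F1 T" using muU unfolding U_def by blast
      then show "(\<Sum>x\<in>T. \<mu> x) = 1" unfolding F1_def by simp
    qed
    have ord: "\<forall>A\<in>events \<Sigma>. \<forall>B\<in>events \<Sigma>. Pl A \<le> Pl B \<longrightarrow> (\<Sum>x\<in>A. \<mu> x) \<le> (\<Sum>x\<in>B. \<mu> x)"
    proof (intro ballI impI)
      fix A B assume "A \<in> events \<Sigma>" "B \<in> events \<Sigma>" "Pl A \<le> Pl B"
      then have "(A, B) \<in> PP" unfolding PP_def by simp
      then have "\<mu> \<in> F2 (A, B)" using muU unfolding U_def by blast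
      then show "(\<Sum>x\<in>A. \<mu> x) \<le> (\<Sum>x\<in>B. \<mu> x)" unfolding F2_def by simp
    qed
    show ?thesis using pm ord by blast
  qed
qed

end
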